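(* Let $H=\sum_ic_iP_i$ be a Pauli Hamiltonian, $|\psi\rangle$ a state, $\mathcal{G}=(G^{[1]},\dots,G^{[m]})$ a grouping of $H$ and $\mathcal{R}=(G'^{[1]},\dots,G'^{[m]})$ a repacking of $\mathcal{G}$. Fix positive shot counts $M_1,\dots,M_m$ such that $G^{[j]}$ and $G'^{[j]}$ are each measured $M_j$ times. Define $\mathrm{Var}^*(\mathcal{G})=\min_w\mathrm{Var}(\overline{E}_{\mathcal{G}}(w))$ and $\mathrm{Var}^*(\mathcal{R})=\min_w\mathrm{Var}(\overline{E}_{\mathcal{R}}(w))$, where the variances are the exact variances (including all within-group covariances). Then $\mathrm{Var}^*(\mathcal{R})\le\mathrm{Var}^*(\mathcal{G})$.
   Context: A Pauli Hamiltonian is $H=\sum_{i=1}^Nc_iP_i$ with real nonzero $c_i$ and distinct $n$-qubit Pauli strings. A grouping is a list of pairwise disjoint sets of mutually commuting Pauli terms of $H$ covering all terms; an overlapped grouping drops disjointness; a repacking of $(G^{[1]},\dots,G^{[m]})$ is an overlapped grouping $(G'^{[1]},\dots,G'^{[m]})$ with $G^{[j]}\subseteq G'^{[j]}$. Measurement model: group $j$ is measured in $M_j$ independent shots, each giving simultaneous $\pm1$ outcomes of all its operators with the Born-rule distribution for $|\psi\rangle$; different groups use independent shots. For an (overlapped) grouping $\mathcal{S}$, $\Gamma_{\mathcal{S}}(i)=\{j:P_i\in \text{group } j\}$, $\overline{\langle P_i\rangle}_{(j)}$ is the sample mean of $P_i$ over group $j$'s shots, and $\overline{E}_{\mathcal{S}}(w)=\sum_ic_i\sum_{j\in\Gamma_{\mathcal{S}}(i)}w_{i,j}\overline{\langle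 P_i\rangle}_{(j)}$ with real weights satisfying $\sum_{j\in\Gamma_{\mathcal{S}}(i)}w_{i,j}=1$ for each $i$; the minimum is over all such weights. *)

theory Defs
  imports "Jordan_Normal_Form.Matrix" "HOL-Library.FuncSet"
begin

datatype pauli = PI | PX | PY | PZ

text \<open>Single-qubit Pauli matrix entries, rows/columns indexed by bits (False = 0, True = 1).\<close>
fun pauli_entry :: "pauli \<Rightarrow> bool \<Rightarrow> bool \<Rightarrow> complex" where
  "pauli_entry PI r c = (if r = c then 1 else 0)"
| "pauli_entry PX r c = (if r \<noteq> c then 1 else 0)"
| "pauli_entry PY r c = (if r = c then 0 else if r then \<i> else - \<i>)"
| "pauli_entry PZ r c = (if r \<noteq> c then 0 else if r then -1 else 1)"

text \<open>An n-qubit Pauli string is a list of length n; its matrix is the tensor product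
  of the single-qubit factors, acting on C^(2^n) (qubit k = bit k of the basis index).\<close>
definition pauli_mat :: "pauli list \<Rightarrow> complex mat" where
  "pauli_mat p = mat (2 ^ length p) (2 ^ length p)
     (\<lambda>(r, c). \<Prod>k<length p. pauli_entry (p ! k) (odd (r div 2 ^ k)) (odd (c div 2 ^ k)))"

definition commute :: "pauli list \<Rightarrow> pauli list \<Rightarrow> bool" where
  "commute p q \<longleftrightarrow> pauli_mat p * pauli_mat q = pauli_mat q * pauli_mat p"

definition pauli_hamiltonian :: "nat \<Rightarrow> nat \<Rightarrow> (nat \<Rightarrow> real) \<Rightarrow> (nat \<Rightarrow> pauli list) \<Rightarrow> bool" where
  "pauli_hamiltonian n N c P \<longleftrightarrow>
     (\<forall>i<N. c i \<noteq> 0 \<and> length (P i) = n) \<and> inj_on P {..<N}"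

definition commuting_group :: "nat \<Rightarrow> (nat \<Rightarrow> pauli list) \<Rightarrow> nat set \<Rightarrow> bool" where
  "commuting_group N P S \<longleftrightarrow> S \<subseteq> {..<N} \<and> (\<forall>i\<in>S. \<forall>k\<in>S. commute (P i) (P k))"

definition overlapped_grouping :: "nat \<Rightarrow> (nat \<Rightarrow> pauli list) \<Rightarrow> nat \<Rightarrow> (nat \<Rightarrow> nat set) \<Rightarrow> bool" where
  "overlapped_grouping N P m S \<longleftrightarrow>
     (\<forall>j<m. commuting_group N P (S j)) \<and> (\<Union>j<m. S j) = {..<N}"

definition grouping :: "nat \<Rightarrow> (nat \<Rightarrow> pauli list) \<Rightarrow> nat \<Rightarrow> (nat \<Rightarrow> nat set) \<Rightarrow> bool" where
  "grouping N P m S \<longleftrightarrow> overlapped_grouping N P m S \<and>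
     (\<forall>j<m. \<forall>j'<m. j \<noteq> j' \<longrightarrow> S j \<inter> S j' = {})"

definition repacking :: "nat \<Rightarrow> (nat \<Rightarrow> pauli list) \<Rightarrow> nat \<Rightarrow> (nat \<Rightarrow> nat set) \<Rightarrow> (nat \<Rightarrow> nat set) \<Rightarrow> bool" where
  "repacking N P m G R \<longleftrightarrow> overlapped_grouping N P m R \<and> (\<forall>j<m. G j \<subseteq> R j)"

definition Gamma :: "nat \<Rightarrow> (nat \<Rightarrow> nat set) \<Rightarrow> nat \<Rightarrow> nat set" where
  "Gamma m S i = {j. j < m \<and> i \<in> S j}"

definition sgn_of :: "bool \<Rightarrow> real" where
  "sgn_of b = (if b then 1 else -1)"

definition expval :: "complex vec \<Rightarrow> complex mat \<Rightarrow> complex" where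
  "expval psi A = (A *\<^sub>v psi) \<bullet>c psi"

text \<open>Born-rule probability that a single shot of the simultaneous measurement of the
  commuting operators P_i, i in S, yields outcome (-1)^(not s i) for each i:
  <psi| prod_{i in S} (I + s_i P_i)/2 |psi>.  (The factors commute, so the order of the
  product, here increasing index order, is irrelevant.)\<close>
definition born_prob :: "nat \<Rightarrow> (nat \<Rightarrow> pauli list) \<Rightarrow> complex vec \<Rightarrow> nat set \<Rightarrow> (nat \<Rightarrow> bool) \<Rightarrow> real" where
  "born_prob n P psi S s = Re (expval psi
     (foldr (\<lambda>i A. ((1/2 :: complex) \<cdot>\<^sub>m (1\<^sub>m (2^n) + complex_of_real (sgn_of (s i)) \<cdot>\<^sub>m pauli_mat (P i))) * A)
        (sorted_list_of_set S) (1\<^sub>m (2^n))))"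

text \<open>Sample space of the whole experiment: for every group j < m, every shot t < M j,
  the outcome signs of all operators in group j.\<close>
definition outcomes :: "nat \<Rightarrow> (nat \<Rightarrow> nat set) \<Rightarrow> (nat \<Rightarrow> nat) \<Rightarrow> (nat \<Rightarrow> nat \<Rightarrow> nat \<Rightarrow> bool) set" where
  "outcomes m S M = PiE {..<m} (\<lambda>j. PiE {..<M j} (\<lambda>t. PiE (S j) (\<lambda>i. (UNIV :: bool set))))"

definition outcome_prob :: "nat \<Rightarrow> (nat \<Rightarrow> pauli list) \<Rightarrow> complex vec \<Rightarrow> nat \<Rightarrow> (nat \<Rightarrow> nat set) \<Rightarrow> (nat \<Rightarrow> nat)
    \<Rightarrow> (nat \<Rightarrow> nat \<Rightarrow> nat \<Rightarrow> bool) \<Rightarrow> real" where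
  "outcome_prob n P psi m S M \<omega> = (\<Prod>j<m. \<Prod>t<M j. born_prob n P psi (S j) (\<omega> j t))"

definition sample_mean :: "(nat \<Rightarrow> nat) \<Rightarrow> (nat \<Rightarrow> nat \<Rightarrow> nat \<Rightarrow> bool) \<Rightarrow> nat \<Rightarrow> nat \<Rightarrow> real" where
  "sample_mean M \<omega> i j = (\<Sum>t<M j. sgn_of (\<omega> j t i)) / real (M j)"

definition estimator :: "nat \<Rightarrow> (nat \<Rightarrow> real) \<Rightarrow> nat \<Rightarrow> (nat \<Rightarrow> nat set) \<Rightarrow> (nat \<Rightarrow> nat)
    \<Rightarrow> (nat \<Rightarrow> nat \<Rightarrow> real) \<Rightarrow> (nat \<Rightarrow> nat \<Rightarrow> nat \<Rightarrow> bool) \<Rightarrow> real" where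
  "estimator N c m S M w \<omega> = (\<Sum>i<N. c i * (\<Sum>j\<in>Gamma m S i. w i j * sample_mean M \<omega> i j))"

definition est_variance :: "nat \<Rightarrow> nat \<Rightarrow> (nat \<Rightarrow> real) \<Rightarrow> (nat \<Rightarrow> pauli list) \<Rightarrow> complex vec
    \<Rightarrow> nat \<Rightarrow> (nat \<Rightarrow> nat set) \<Rightarrow> (nat \<Rightarrow> nat) \<Rightarrow> (nat \<Rightarrow> nat \<Rightarrow> real) \<Rightarrow> real" where
  "est_variance n N c P psi m S M w =
    (let \<Omega> = outcomes m S M;
         p = outcome_prob n P psi m S M;
         X = estimator N c m S M w;
         mu = (\<Sum>\<omega>\<in>\<Omega>. p \<omega> * X \<omega>)
     in (\<Sum>\<omega>\<in>\<Omega>. p \<omega> * (X \<omega> - mu)\<^sup>2))"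

definition admissible_weights :: "nat \<Rightarrow> nat \<Rightarrow> (nat \<Rightarrow> nat set) \<Rightarrow> (nat \<Rightarrow> nat \<Rightarrow> real) \<Rightarrow> bool" where
  "admissible_weights N m S w \<longleftrightarrow> (\<forall>i<N. (\<Sum>j\<in>Gamma m S i. w i j) = 1)"

text \<open>Var^*(S) = minimum (infimum; the minimum is attained) of the variance over admissible weights.\<close>
definition opt_variance :: "nat \<Rightarrow> nat \<Rightarrow> (nat \<Rightarrow> real) \<Rightarrow> (nat \<Rightarrow> pauli list) \<Rightarrow> complex vec
    \<Rightarrow> nat \<Rightarrow> (nat \<Rightarrow> nat set) \<Rightarrow> (nat \<Rightarrow> nat) \<Rightarrow> real" where
  "opt_variance n N c P psi m S M =
     (INF w \<in> {w. admissible_weights N m S w}. est_variance n N c P psi m S M w)"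

end

theory Submission
  imports Defs
begin


lemma bits_sum:
  fixes f :: "nat \<Rightarrow> bool \<Rightarrow> 'a::comm_semiring_1"
  shows "(\<Sum>x<(2::nat)^n. \<Prod>k<n. f k (odd (x div 2^k))) = (\<Prod>k<n. f k False + f k True)"
proof (induction n arbitrary: f)
  case 0
  have h: "{..<(1::nat)} = {0}" by auto
  show ?case using card_lessThan[of "1::nat"] by simp
next
  case (Suc n)
  have p: "(0::nat) < 2^n" by simp
  have e: "{..<(2::nat)^Suc n} = {..Suc (2*(2^n - 1))}"
  proof -
    have "(2::nat)^Suc n = Suc (Suc (2*(2^n-1)))" using p by (simp only: power_Suc)
    then show ?thesis by (simp only: lessThan_Suc_atMost)
  qed
  have d: "(x::nat) div 2 ^ Suc k = (x div 2) div 2^k" for x k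
    by (simp add: div_mult2_eq power_Suc)
  have "(\<Sum>x<(2::nat)^Suc n. \<Prod>k<Suc n. f k (odd (x div 2^k)))
      = (\<Sum>x<(2::nat)^Suc n. f 0 (odd x) * (\<Prod>k<n. f (Suc k) (odd ((x div 2) div 2^k))))"
    by (simp only: prod.lessThan_Suc_shift d) simp
  also have "\<dots> = (\<Sum>y\<le>(2::nat)^n - 1. f 0 False * (\<Prod>k<n. f (Suc k) (odd (y div 2^k)))
        + f 0 True * (\<Prod>k<n. f (Suc k) (odd (y div 2^k))))"
    unfolding e sum.in_pairs_0 by simp
  also have "{..2^n - 1} = {..<(2::nat)^n}" using p by (metis Suc_pred lessThan_Suc_atMost One_nat_def)
  also have "(\<Sum>y\<in>{..<(2::nat)^n}. f 0 False * (\<Prod>k<n. f (Suc k) (odd (y div 2^k)))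
        + f 0 True * (\<Prod>k<n. f (Suc k) (odd (y div 2^k))))
     = (f 0 False + f 0 True) * (\<Sum>y<(2::nat)^n. (\<Prod>k<n. f (Suc k) (odd (y div 2^k))))"
    by (simp add: sum_distrib_left algebra_simps sum.distrib)
  also have "\<dots> = (f 0 False + f 0 True) * (\<Prod>k<n. f (Suc k) False + f (Suc k) True)"
    using Suc[of "\<lambda>k. f (Suc k)"] by simp
  also have "\<dots> = (\<Prod>k<Suc n. f k False + f k True)"
    by (simp only: prod.lessThan_Suc_shift)
  finally show ?case .
qed

lemma bits_eq:
  fixes r c :: nat
  assumes "r < 2^n" "c < 2^n" "\<forall>k<n. odd (r div 2^k) = odd (c div 2^k)"
  shows "r = c"
proof (rule bit_eqI)
  fix k show "bit r k = bit c k"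
  proof (cases "k < n")
    case True then show ?thesis using assms(3) by (simp add: bit_iff_odd)
  next
    case False
    then have "r < 2^k" "c < 2^k" using assms(1,2)
      by (meson order_less_le_trans not_less one_le_numeral power_increasing)+
    then show ?thesis by (simp add: bit_iff_odd)
  qed
qed

lemma pauli_carrier: "pauli_mat p \<in> carrier_mat (2^length p) (2^length p)"
  unfolding pauli_mat_def by simp

lemma pauli_entry_sq:
  "(\<Sum>b\<in>UNIV. pauli_entry a r b * pauli_entry a b c) = (if r = c then 1 else 0)"
  by (cases a; cases r; cases c) (simp_all add: UNIV_bool)

lemma pauli_sq: "pauli_mat p * pauli_mat p = 1\<^sub>m (2^length p)"
proof (rule eq_matI)
  fix r c assume rc: "r < dim_row (1\<^sub>m (2 ^ length p))" "c < dim_col (1\<^sub>m (2 ^ length p))"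
  let ?n = "length p"
  let ?e = "\<lambda>k b1 b2. pauli_entry (p ! k) b1 b2"
  have "(pauli_mat p * pauli_mat p) $$ (r, c) =
     (\<Sum>x<(2::nat)^?n. (\<Prod>k<?n. ?e k (odd (r div 2^k)) (odd (x div 2^k))) * (\<Prod>k<?n. ?e k (odd (x div 2^k)) (odd (c div 2^k))))"
    using rc unfolding pauli_mat_def by (simp add: scalar_prod_def atLeast0LessThan)
  also have "\<dots> = (\<Sum>x<(2::nat)^?n. \<Prod>k<?n. ?e k (odd (r div 2^k)) (odd (x div 2^k)) * ?e k (odd (x div 2^k)) (odd (c div 2^k)))"
    by (simp add: prod.distrib)
  also have "\<dots> = (\<Prod>k<?n. ?e k (odd (r div 2^k)) False * ?e k False (odd (c div 2^k)) + ?e k (odd (r div 2^k)) True * ?e k True (odd (c div 2^k)))"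
    by (rule bits_sum[of "\<lambda>k b. ?e k (odd (r div 2^k)) b * ?e k b (odd (c div 2^k))"])
  also have "\<dots> = (\<Prod>k<?n. if odd (r div 2^k) = odd (c div 2^k) then 1 else 0)"
    using pauli_entry_sq by (simp add: UNIV_bool add.commute)
  also have "\<dots> = (if r = c then 1 else 0)"
  proof (cases "r = c")
    case True then show ?thesis by simp
  next
    case False
    then obtain k where "k < ?n" "odd (r div 2^k) \<noteq> odd (c div 2^k)"
      using bits_eq[of r ?n c] rc by auto
    then have "(\<Prod>k<?n. if odd (r div 2^k) = odd (c div 2^k) then 1 else (0::complex)) = 0"
      by (intro prod_zero) auto
    then show ?thesis using False by simp
  qed
  finally show "(pauli_mat p * pauli_mat p) $$ (r, c) = 1\<^sub>m (2 ^ length p) $$ (r, c)"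
    using rc by simp
qed (auto simp: pauli_mat_def)

definition herm :: "complex mat \<Rightarrow> bool" where
  "herm A \<longleftrightarrow> (\<forall>i<dim_row A. \<forall>j<dim_col A. A $$ (i,j) = cnj (A $$ (j,i)))"

lemma pauli_entry_cnj: "cnj (pauli_entry a r c) = pauli_entry a c r"
  by (cases a; cases r; cases c) simp_all

lemma pauli_herm: "herm (pauli_mat p)"
  unfolding herm_def pauli_mat_def by (simp add: pauli_entry_cnj)



lemma herm_adj:
  assumes A: "A \<in> carrier_mat d d" and h: "herm A" and v: "v \<in> carrier_vec d" and w: "w \<in> carrier_vec d"
  shows "(A *\<^sub>v v) \<bullet>c w = v \<bullet>c (A *\<^sub>v w)"
proof -
  have hA: "\<And>i j. i < d \<Longrightarrow> j < d \<Longrightarrow> cnj (A $$ (j,i)) = A $$ (i,j)"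
  proof -
    fix i j assume "i < d" "j < d"
    then have "A $$ (j,i) = cnj (A $$ (i,j))" using h A unfolding herm_def by blast
    then show "cnj (A $$ (j,i)) = A $$ (i,j)" by simp
  qed
  have "(A *\<^sub>v v) \<bullet>c w = (\<Sum>i<d. (\<Sum>j<d. A $$ (i,j) * v $ j) * cnj (w $ i))"
    using A v w by (simp add: scalar_prod_def row_def atLeast0LessThan)
  also have "\<dots> = (\<Sum>i<d. \<Sum>j<d. A $$ (i,j) * v $ j * cnj (w $ i))"
    by (simp add: sum_distrib_right)
  also have "\<dots> = (\<Sum>j<d. \<Sum>i<d. A $$ (i,j) * v $ j * cnj (w $ i))"
    by (rule sum.swap)
  also have "\<dots> = (\<Sum>j<d. v $ j * (\<Sum>i<d. cnj (A $$ (j,i)) * cnj (w $ i)))"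
    unfolding sum_distrib_left
  proof (intro sum.cong refl)
    fix j i assume "j \<in> {..<d}" "i \<in> {..<d}"
    then show "A $$ (i,j) * v $ j * cnj (w $ i) = v $ j * (cnj (A $$ (j,i)) * cnj (w $ i))"
      using hA[of i j] by simp
  qed
  also have "\<dots> = (\<Sum>j<d. v $ j * cnj (\<Sum>i<d. A $$ (j,i) * w $ i))"
    by simp
  also have "\<dots> = v \<bullet>c (A *\<^sub>v w)"
    using A v w by (simp add: scalar_prod_def row_def atLeast0LessThan)
  finally show ?thesis .
qed

lemma hermD: "herm A \<Longrightarrow> A \<in> carrier_mat d d \<Longrightarrow> i < d \<Longrightarrow> j < d \<Longrightarrow> cnj (A $$ (j,i)) = A $$ (i,j)"
proof -
  assume h: "herm A" and A: "A \<in> carrier_mat d d" and ij: "i < d" "j < d"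
  then have "A $$ (j,i) = cnj (A $$ (i,j))" unfolding herm_def by blast
  then show ?thesis by simp
qed

lemma hermI: "A \<in> carrier_mat d d \<Longrightarrow> (\<And>i j. i < d \<Longrightarrow> j < d \<Longrightarrow> A $$ (i,j) = cnj (A $$ (j,i))) \<Longrightarrow> herm A"
proof -
  assume A: "A \<in> carrier_mat d d" and h: "\<And>i j. i < d \<Longrightarrow> j < d \<Longrightarrow> A $$ (i,j) = cnj (A $$ (j,i))"
  show "herm A" unfolding herm_def
  proof (intro allI impI)
    fix i j assume "i < dim_row A" "j < dim_col A"
    then show "A $$ (i,j) = cnj (A $$ (j,i))" using A h[of i j] by simp
  qed
qed

lemma herm_mult:
  assumes A: "A \<in> carrier_mat d d" and B: "B \<in> carrier_mat d d" and hA: "herm A" and hB: "herm B"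
    and c: "A * B = B * A"
  shows "herm (A * B)"
proof (rule hermI[of _ d])
  show "A * B \<in> carrier_mat d d" using A B by simp
  fix i j assume i: "i < d" and j: "j < d"
  have "cnj ((A * B) $$ (j, i)) = (\<Sum>k<d. cnj (A $$ (j,k)) * cnj (B $$ (k,i)))"
    using A B i j by (simp add: scalar_prod_def row_def col_def atLeast0LessThan)
  also have "\<dots> = (\<Sum>k<d. B $$ (i,k) * A $$ (k,j))"
    using hermD[OF hA A] hermD[OF hB B] i j by (auto simp: mult.commute intro!: sum.cong)
  also have "\<dots> = (B * A) $$ (i,j)"
    using A B i j by (simp add: scalar_prod_def row_def col_def atLeast0LessThan)
  finally show "(A * B) $$ (i, j) = cnj ((A * B) $$ (j, i))" using c by simp
qed

definition Emat :: "nat \<Rightarrow> complex mat \<Rightarrow> bool \<Rightarrow> complex mat" where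
  "Emat d A b = (1/2 :: complex) \<cdot>\<^sub>m (1\<^sub>m d + complex_of_real (sgn_of b) \<cdot>\<^sub>m A)"

lemma Emat_carrier: "A \<in> carrier_mat d d \<Longrightarrow> Emat d A b \<in> carrier_mat d d"
  unfolding Emat_def by simp

lemma Emat_herm: assumes A: "A \<in> carrier_mat d d" and h: "herm A" shows "herm (Emat d A b)"
proof (rule hermI[of _ d])
  show "Emat d A b \<in> carrier_mat d d" using A by (rule Emat_carrier)
  fix i j assume i: "i < d" and j: "j < d"
  show "Emat d A b $$ (i, j) = cnj (Emat d A b $$ (j, i))"
    using hermD[OF h A i j] A i j unfolding Emat_def by auto
qed

lemma Emat_sum: "A \<in> carrier_mat d d \<Longrightarrow> Emat d A True + Emat d A False = 1\<^sub>m d"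
  unfolding Emat_def sgn_of_def by (intro eq_matI) (auto simp: field_simps)

lemma smult_mult_both:
  assumes X: "X \<in> carrier_mat d d" and Y: "Y \<in> carrier_mat d d"
  shows "(a \<cdot>\<^sub>m X) * (b \<cdot>\<^sub>m Y) = (a * b) \<cdot>\<^sub>m (X * Y :: complex mat)"
proof -
  have "(a \<cdot>\<^sub>m X) * (b \<cdot>\<^sub>m Y) = a \<cdot>\<^sub>m (X * (b \<cdot>\<^sub>m Y))"
    using X Y by (intro mult_smult_assoc_mat[of _ d d]) auto
  also have "X * (b \<cdot>\<^sub>m Y) = b \<cdot>\<^sub>m (X * Y)" using X Y by (rule mult_smult_distrib)
  also have "a \<cdot>\<^sub>m (b \<cdot>\<^sub>m (X * Y)) = (a * b) \<cdot>\<^sub>m (X * Y)"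
    by (intro eq_matI) auto
  finally show ?thesis .
qed

lemma prodX:
  assumes A: "(A :: complex mat) \<in> carrier_mat d d" and B: "B \<in> carrier_mat d d"
  shows "(1\<^sub>m d + s \<cdot>\<^sub>m A) * (1\<^sub>m d + t \<cdot>\<^sub>m B) = (1\<^sub>m d + t \<cdot>\<^sub>m B) + (s \<cdot>\<^sub>m A + s \<cdot>\<^sub>m (t \<cdot>\<^sub>m (A * B)))"
proof -
  have sA: "s \<cdot>\<^sub>m A \<in> carrier_mat d d" and tB: "t \<cdot>\<^sub>m B \<in> carrier_mat d d"
    and tB1: "1\<^sub>m d + t \<cdot>\<^sub>m B \<in> carrier_mat d d" using A B by auto
  have "(1\<^sub>m d + s \<cdot>\<^sub>m A) * (1\<^sub>m d + t \<cdot>\<^sub>m B) = 1\<^sub>m d * (1\<^sub>m d + t \<cdot>\<^sub>m B) + (s \<cdot>\<^sub>m A) * (1\<^sub>m d + t \<cdot>\<^sub>m B)"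
    by (rule add_mult_distrib_mat[OF one_carrier_mat sA tB1])
  also have "1\<^sub>m d * (1\<^sub>m d + t \<cdot>\<^sub>m B) = 1\<^sub>m d + t \<cdot>\<^sub>m B"
    by (rule left_mult_one_mat[OF tB1])
  also have "(s \<cdot>\<^sub>m A) * (1\<^sub>m d + t \<cdot>\<^sub>m B) = (s \<cdot>\<^sub>m A) * 1\<^sub>m d + (s \<cdot>\<^sub>m A) * (t \<cdot>\<^sub>m B)"
    by (rule mult_add_distrib_mat[OF sA one_carrier_mat tB])
  also have "(s \<cdot>\<^sub>m A) * 1\<^sub>m d = s \<cdot>\<^sub>m A" by (rule right_mult_one_mat[OF sA])
  also have "(s \<cdot>\<^sub>m A) * (t \<cdot>\<^sub>m B) = s \<cdot>\<^sub>m (A * (t \<cdot>\<^sub>m B))"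
    by (rule mult_smult_assoc_mat[OF A tB])
  also have "A * (t \<cdot>\<^sub>m B) = t \<cdot>\<^sub>m (A * B)"
    by (rule mult_smult_distrib[OF A B])
  finally show ?thesis .
qed




lemma Emat_idem:
  assumes A: "A \<in> carrier_mat d d" and sq: "A * A = 1\<^sub>m d"
  shows "Emat d A b * Emat d A b = Emat d A b"
proof -
  define s where "s = complex_of_real (sgn_of b)"
  have ss: "s * s = 1" unfolding s_def sgn_of_def by simp
  define X where "X = 1\<^sub>m d + s \<cdot>\<^sub>m A"
  have X: "X \<in> carrier_mat d d" unfolding X_def using A by simp
  have "X * X = (1\<^sub>m d + s \<cdot>\<^sub>m A) + (s \<cdot>\<^sub>m A + s \<cdot>\<^sub>m (s \<cdot>\<^sub>m (A * A)))"
    unfolding X_def by (rule prodX[OF A A])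
  also have "\<dots> = 2 \<cdot>\<^sub>m X" unfolding X_def sq using A ss
    by (intro eq_matI) (auto simp: mult.assoc[symmetric])
  finally have XX: "X * X = 2 \<cdot>\<^sub>m X" .
  have "Emat d A b = (1/2) \<cdot>\<^sub>m X" unfolding Emat_def X_def s_def ..
  then show ?thesis using X XX smult_mult_both[OF X X, of "1/2" "1/2"]
    by (intro eq_matI) auto
qed

lemma Emat_comm:
  assumes A: "A \<in> carrier_mat d d" and B: "B \<in> carrier_mat d d" and c: "A * B = B * A"
  shows "Emat d A a * Emat d B b = Emat d B b * Emat d A a"
proof -
  define s where "s = complex_of_real (sgn_of a)"
  define t where "t = complex_of_real (sgn_of b)"
  have "(1\<^sub>m d + s \<cdot>\<^sub>m A) * (1\<^sub>m d + t \<cdot>\<^sub>m B) = (1\<^sub>m d + t \<cdot>\<^sub>m B) * (1\<^sub>m d + s \<cdot>\<^sub>m A)"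
    unfolding prodX[OF A B] prodX[OF B A] c using A B
    by (intro eq_matI) auto
  moreover have "(1\<^sub>m d + s \<cdot>\<^sub>m A) \<in> carrier_mat d d" "(1\<^sub>m d + t \<cdot>\<^sub>m B) \<in> carrier_mat d d"
    using A B by auto
  ultimately show ?thesis unfolding Emat_def s_def[symmetric] t_def[symmetric]
    by (simp add: smult_mult_both[of _ d])
qed



lemma fiber_sum:
  fixes I :: "'i set" and B :: "'i \<Rightarrow> 'x set" and A :: "'i \<Rightarrow> 'y set"
    and r :: "'i \<Rightarrow> 'x \<Rightarrow> 'y" and pB :: "'i \<Rightarrow> 'x \<Rightarrow> real" and pA :: "'i \<Rightarrow> 'y \<Rightarrow> real"
    and h :: "('i \<Rightarrow> 'y) \<Rightarrow> real"
  assumes fI: "finite I" and fB: "\<And>i. i \<in> I \<Longrightarrow> finite (B i)" and fA: "\<And>i. i \<in> I \<Longrightarrow> finite (A i)"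
    and rA: "\<And>i x. i \<in> I \<Longrightarrow> x \<in> B i \<Longrightarrow> r i x \<in> A i"
    and fib: "\<And>i y. i \<in> I \<Longrightarrow> y \<in> A i \<Longrightarrow> (\<Sum>x\<in>{x\<in>B i. r i x = y}. pB i x) = pA i y"
  shows "(\<Sum>x\<in>PiE I B. (\<Prod>i\<in>I. pB i (x i)) * h (\<lambda>i\<in>I. r i (x i)))
       = (\<Sum>y\<in>PiE I A. (\<Prod>i\<in>I. pA i (y i)) * h y)"
proof -
  let ?R = "\<lambda>x. (\<lambda>i\<in>I. r i (x i))"
  have fPB: "finite (PiE I B)" using fI fB by (simp add: finite_PiE)
  have fPA: "finite (PiE I A)" using fI fA by (simp add: finite_PiE)
  have img: "?R ` PiE I B \<subseteq> PiE I A" using rA by (auto simp: PiE_iff)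
  have "(\<Sum>x\<in>PiE I B. (\<Prod>i\<in>I. pB i (x i)) * h (?R x))
      = (\<Sum>y\<in>PiE I A. \<Sum>x\<in>{x\<in>PiE I B. ?R x = y}. (\<Prod>i\<in>I. pB i (x i)) * h (?R x))"
    by (rule sum.group[OF fPB fPA img, symmetric])
  also have "\<dots> = (\<Sum>y\<in>PiE I A. (\<Prod>i\<in>I. pA i (y i)) * h y)"
  proof (rule sum.cong[OF refl])
    fix y assume y: "y \<in> PiE I A"
    have seteq: "{x\<in>PiE I B. ?R x = y} = PiE I (\<lambda>i. {x\<in>B i. r i x = y i})"
    proof (rule equalityI; rule subsetI)
      fix x assume "x \<in> {x\<in>PiE I B. ?R x = y}"
      then show "x \<in> PiE I (\<lambda>i. {x\<in>B i. r i x = y i})"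
        by (auto simp: PiE_iff restrict_def fun_eq_iff) metis
    next
      fix x assume x: "x \<in> PiE I (\<lambda>i. {x\<in>B i. r i x = y i})"
      have "?R x = y"
      proof
        fix i show "?R x i = y i" using x y by (cases "i \<in> I") (auto simp: PiE_iff extensional_def)
      qed
      then show "x \<in> {x\<in>PiE I B. ?R x = y}" using x by (auto simp: PiE_iff)
    qed
    have "(\<Sum>x\<in>{x\<in>PiE I B. ?R x = y}. (\<Prod>i\<in>I. pB i (x i)) * h (?R x))
        = (\<Sum>x\<in>{x\<in>PiE I B. ?R x = y}. (\<Prod>i\<in>I. pB i (x i))) * h y"
      by (simp add: sum_distrib_right)
    also have "(\<Sum>x\<in>{x\<in>PiE I B. ?R x = y}. (\<Prod>i\<in>I. pB i (x i)))
        = (\<Prod>i\<in>I. \<Sum>x\<in>{x\<in>B i. r i x = y i}. pB i x)"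
      unfolding seteq by (rule prod_sum_PiE[symmetric]) (use fI fB in auto)
    also have "\<dots> = (\<Prod>i\<in>I. pA i (y i))"
      using y fib by (auto simp: PiE_iff intro!: prod.cong)
    finally show "(\<Sum>x\<in>{x\<in>PiE I B. ?R x = y}. (\<Prod>i\<in>I. pB i (x i)) * h (?R x)) = (\<Prod>i\<in>I. pA i (y i)) * h y" .
  qed
  finally show ?thesis .
qed

lemma fiber_sum_ind:
  fixes I :: "'i set" and B :: "'i \<Rightarrow> 'x set" and A :: "'i \<Rightarrow> 'y set"
    and r :: "'i \<Rightarrow> 'x \<Rightarrow> 'y" and pB :: "'i \<Rightarrow> 'x \<Rightarrow> real" and pA :: "'i \<Rightarrow> 'y \<Rightarrow> real"
  assumes fI: "finite I" and fB: "\<And>i. i \<in> I \<Longrightarrow> finite (B i)" and fA: "\<And>i. i \<in> I \<Longrightarrow> finite (A i)"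
    and rA: "\<And>i x. i \<in> I \<Longrightarrow> x \<in> B i \<Longrightarrow> r i x \<in> A i"
    and fib: "\<And>i y. i \<in> I \<Longrightarrow> y \<in> A i \<Longrightarrow> (\<Sum>x\<in>{x\<in>B i. r i x = y}. pB i x) = pA i y"
    and y: "y \<in> PiE I A"
  shows "(\<Sum>x\<in>{x \<in> PiE I B. (\<lambda>i\<in>I. r i (x i)) = y}. (\<Prod>i\<in>I. pB i (x i))) = (\<Prod>i\<in>I. pA i (y i))"
proof -
  have fPB: "finite (PiE I B)" using fI fB by (simp add: finite_PiE)
  have fPA: "finite (PiE I A)" using fI fA by (simp add: finite_PiE)
  have "(\<Sum>x\<in>{x \<in> PiE I B. (\<lambda>i\<in>I. r i (x i)) = y}. (\<Prod>i\<in>I. pB i (x i)))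
     = (\<Sum>x\<in>PiE I B. (\<Prod>i\<in>I. pB i (x i)) * (\<lambda>z. if z = y then 1 else 0) (\<lambda>i\<in>I. r i (x i)))"
    using fPB by (simp add: sum.inter_filter[symmetric] if_distrib cong: if_cong)
  also have "\<dots> = (\<Sum>z\<in>PiE I A. (\<Prod>i\<in>I. pA i (z i)) * (\<lambda>z. if z = y then 1 else 0) z)"
    by (rule fiber_sum[OF fI fB fA rA fib])
  also have "\<dots> = (\<Prod>i\<in>I. pA i (y i))"
    using fPA y by (simp add: if_distrib cong: if_cong)
  finally show ?thesis .
qed



definition QL :: "nat \<Rightarrow> (nat \<Rightarrow> complex mat) \<Rightarrow> nat list \<Rightarrow> complex mat" where
  "QL d F l = foldr (\<lambda>i A. F i * A) l (1\<^sub>m d)"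

lemma QL_Cons: "QL d F (a # l) = F a * QL d F l" unfolding QL_def by simp

lemma QL_comm:
  assumes "\<forall>i\<in>set l. F i \<in> carrier_mat d d" and "C \<in> carrier_mat d d"
    and "\<forall>i\<in>set l. C * F i = F i * C"
  shows "QL d F l \<in> carrier_mat d d \<and> C * QL d F l = QL d F l * C"
  using assms
proof (induction l)
  case Nil then show ?case by (simp add: QL_def)
next
  case (Cons a l)
  then have Fa: "F a \<in> carrier_mat d d" and IH: "QL d F l \<in> carrier_mat d d" "C * QL d F l = QL d F l * C"
    and ca: "C * F a = F a * C" and C: "C \<in> carrier_mat d d" by auto
  have "C * (F a * QL d F l) = (C * F a) * QL d F l" using C Fa IH by simp
  also have "\<dots> = F a * (C * QL d F l)" unfolding ca using C Fa IH by simp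
  also have "\<dots> = (F a * QL d F l) * C" unfolding IH(2) using C Fa IH by simp
  finally show ?case using Fa IH by (simp add: QL_Cons)
qed

lemma QL_props:
  assumes "\<forall>i\<in>set l. F i \<in> carrier_mat d d \<and> herm (F i) \<and> F i * F i = F i"
    and "\<forall>i\<in>set l. \<forall>j\<in>set l. F i * F j = F j * F i"
  shows "QL d F l \<in> carrier_mat d d \<and> herm (QL d F l) \<and> QL d F l * QL d F l = QL d F l"
  using assms
proof (induction l)
  case Nil
  have "herm (1\<^sub>m d :: complex mat)" by (rule hermI[of _ d]) auto
  then show ?case by (simp add: QL_def)
next
  case (Cons a l)
  let ?Q = "QL d F l"
  from Cons.prems have Fa: "F a \<in> carrier_mat d d" "herm (F a)" "F a * F a = F a" by auto
  from Cons have IH: "?Q \<in> carrier_mat d d" "herm ?Q" "?Q * ?Q = ?Q" by auto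
  have c: "F a * ?Q = ?Q * F a"
    using QL_comm[of l F d "F a"] Cons.prems by auto
  have "herm (F a * ?Q)" by (rule herm_mult[OF Fa(1) IH(1) Fa(2) IH(2) c])
  moreover have "(F a * ?Q) * (F a * ?Q) = F a * ?Q"
  proof -
    have "(F a * ?Q) * (F a * ?Q) = ((F a * ?Q) * F a) * ?Q"
      by (rule assoc_mult_mat[symmetric, of _ d d _ d _ d]) (use Fa IH in auto)
    also have "(F a * ?Q) * F a = F a * (?Q * F a)"
      by (rule assoc_mult_mat[of _ d d _ d _ d]) (use Fa IH in auto)
    also have "F a * (?Q * F a) * ?Q = F a * (F a * ?Q) * ?Q" by (simp only: c[symmetric])
    also have "\<dots> = F a * ((F a * ?Q) * ?Q)"
      by (rule assoc_mult_mat[of _ d d _ d _ d]) (use Fa IH in auto)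
    also have "(F a * ?Q) * ?Q = F a * (?Q * ?Q)"
      by (rule assoc_mult_mat[of _ d d _ d _ d]) (use Fa IH in auto)
    also have "F a * (F a * (?Q * ?Q)) = (F a * F a) * ?Q" unfolding IH(3)
      by (rule assoc_mult_mat[symmetric, of _ d d _ d _ d]) (use Fa IH in auto)
    finally show ?thesis unfolding Fa(3) .
  qed
  ultimately show ?case using Fa IH by (simp add: QL_Cons)
qed

lemma herm_idem_nonneg:
  assumes Q: "Q \<in> carrier_mat d d" and h: "herm Q" and idem: "Q * Q = Q" and psi: "psi \<in> carrier_vec d"
  shows "0 \<le> Re ((Q *\<^sub>v psi) \<bullet>c psi)"
proof -
  have "(Q *\<^sub>v psi) \<bullet>c psi = ((Q * Q) *\<^sub>v psi) \<bullet>c psi" using idem by simp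
  also have "\<dots> = (Q *\<^sub>v (Q *\<^sub>v psi)) \<bullet>c psi" using Q psi by simp
  also have "\<dots> = (Q *\<^sub>v psi) \<bullet>c (Q *\<^sub>v psi)"
    by (rule herm_adj[OF Q h]) (use Q psi in auto)
  finally have "(Q *\<^sub>v psi) \<bullet>c psi = (Q *\<^sub>v psi) \<bullet>c (Q *\<^sub>v psi)" .
  moreover have "0 \<le> (Q *\<^sub>v psi) \<bullet>c (Q *\<^sub>v psi)" by (rule conjugate_square_ge_0_vec)
  ultimately show ?thesis by (simp add: less_eq_complex_def)
qed

definition valid :: "nat \<Rightarrow> (nat \<Rightarrow> pauli list) \<Rightarrow> nat set \<Rightarrow> bool" where
  "valid n P S \<longleftrightarrow> finite S \<and> (\<forall>i\<in>S. length (P i) = n) \<and> (\<forall>i\<in>S. \<forall>k\<in>S. commute (P i) (P k))"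

lemma born_QL: "born_prob n P psi S s =
  Re (expval psi (QL (2^n) (\<lambda>i. Emat (2^n) (pauli_mat (P i)) (s i)) (sorted_list_of_set S)))"
  unfolding born_prob_def QL_def Emat_def ..

lemma valid_F:
  assumes "valid n P S" "i \<in> S"
  shows "Emat (2^n) (pauli_mat (P i)) b \<in> carrier_mat (2^n) (2^n) \<and> herm (Emat (2^n) (pauli_mat (P i)) b)
     \<and> Emat (2^n) (pauli_mat (P i)) b * Emat (2^n) (pauli_mat (P i)) b = Emat (2^n) (pauli_mat (P i)) b"
proof -
  have L: "length (P i) = n" using assms unfolding valid_def by auto
  have C: "pauli_mat (P i) \<in> carrier_mat (2^n) (2^n)" using pauli_carrier[of "P i"] L by simp
  show ?thesis using Emat_carrier[OF C] Emat_herm[OF C pauli_herm] Emat_idem[OF C] pauli_sq[of "P i"] L by simp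
qed

lemma valid_comm:
  assumes "valid n P S" "i \<in> S" "k \<in> S"
  shows "Emat (2^n) (pauli_mat (P i)) a * Emat (2^n) (pauli_mat (P k)) b = Emat (2^n) (pauli_mat (P k)) b * Emat (2^n) (pauli_mat (P i)) a"
proof -
  have L: "length (P i) = n" "length (P k) = n" using assms unfolding valid_def by auto
  have C: "pauli_mat (P i) \<in> carrier_mat (2^n) (2^n)" "pauli_mat (P k) \<in> carrier_mat (2^n) (2^n)"
    using pauli_carrier[of "P i"] pauli_carrier[of "P k"] L by auto
  have "pauli_mat (P i) * pauli_mat (P k) = pauli_mat (P k) * pauli_mat (P i)"
    using assms unfolding valid_def commute_def by auto
  then show ?thesis by (rule Emat_comm[OF C])
qed

lemma born_nonneg:
  assumes v: "valid n P S" and psi: "psi \<in> carrier_vec (2^n)"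
  shows "0 \<le> born_prob n P psi S s"
proof -
  have fS: "finite S" using v unfolding valid_def by auto
  let ?F = "\<lambda>i. Emat (2^n) (pauli_mat (P i)) (s i)"
  have "QL (2^n) ?F (sorted_list_of_set S) \<in> carrier_mat (2^n) (2^n) \<and> herm (QL (2^n) ?F (sorted_list_of_set S))
     \<and> QL (2^n) ?F (sorted_list_of_set S) * QL (2^n) ?F (sorted_list_of_set S) = QL (2^n) ?F (sorted_list_of_set S)"
    by (rule QL_props) (use valid_F[OF v] valid_comm[OF v] fS in auto)
  then show ?thesis unfolding born_QL expval_def using herm_idem_nonneg psi by blast
qed



lemma foldr_closed:
  assumes "\<forall>x\<in>set l. \<forall>Y\<in>C. f x Y \<in> C" "z \<in> C"
  shows "foldr f l z \<in> C"
  using assms by (induction l) auto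

lemma foldr_insort:
  fixes f :: "nat \<Rightarrow> 'a \<Rightarrow> 'a"
  assumes "\<forall>x\<in>set l. \<forall>Y\<in>C. f a (f x Y) = f x (f a Y)" "\<forall>x\<in>set l. \<forall>Y\<in>C. f x Y \<in> C" "z \<in> C"
  shows "foldr f (insort a l) z = f a (foldr f l z)"
  using assms
proof (induction l)
  case Nil then show ?case by simp
next
  case (Cons x xs)
  have cl: "foldr f xs z \<in> C" using Cons.prems by (intro foldr_closed) auto
  show ?case
  proof (cases "a \<le> x")
    case True then show ?thesis by simp
  next
    case False
    then have "foldr f (insort a (x # xs)) z = f x (foldr f (insort a xs) z)" by simp
    also have "foldr f (insort a xs) z = f a (foldr f xs z)" using Cons by auto
    also have "f x (f a (foldr f xs z)) = f a (f x (foldr f xs z))" using Cons.prems cl by auto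
    finally show ?thesis by simp
  qed
qed

lemma valid_subset: "valid n P S \<Longrightarrow> T \<subseteq> S \<Longrightarrow> valid n P T"
  unfolding valid_def by (auto intro: finite_subset)

lemma expval_add:
  assumes "A \<in> carrier_mat d d" "B \<in> carrier_mat d d" "psi \<in> carrier_vec d"
  shows "expval psi (A + B) = expval psi A + expval psi B"
  unfolding expval_def using assms
  by (simp add: add_mult_distrib_mat_vec[of _ d d] add_scalar_prod_distrib[of _ d])

lemma QL_cong: "(\<And>i. i \<in> set l \<Longrightarrow> F i = F' i) \<Longrightarrow> QL d F l = QL d F' l"
  unfolding QL_def by (induction l) auto

lemma born_pair:
  assumes v: "valid n P (insert a S)" and a: "a \<notin> S" and psi: "psi \<in> carrier_vec (2^n)"
  shows "born_prob n P psi (insert a S) (g(a:=True)) + born_prob n P psi (insert a S) (g(a:=False))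
       = born_prob n P psi S g"
proof -
  let ?d = "2^n :: nat"
  have fS: "finite S" using v unfolding valid_def by auto
  let ?F = "\<lambda>b i. Emat ?d (pauli_mat (P i)) ((g(a:=b)) i)"
  let ?G = "\<lambda>i. Emat ?d (pauli_mat (P i)) (g i)"
  let ?Q = "QL ?d ?G (sorted_list_of_set S)"
  have vS: "valid n P S" using v by (rule valid_subset) auto
  have Qc: "?Q \<in> carrier_mat ?d ?d"
    using QL_props[of "sorted_list_of_set S" ?G ?d] valid_F[OF vS] valid_comm[OF vS] fS by auto
  have key: "QL ?d (?F b) (sorted_list_of_set (insert a S)) = Emat ?d (pauli_mat (P a)) b * ?Q" for b
  proof -
    have "sorted_list_of_set (insert a S) = insort a (sorted_list_of_set S)"
      using fS a by (simp add: sorted_list_of_set_insert)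
    then have "QL ?d (?F b) (sorted_list_of_set (insert a S)) = ?F b a * QL ?d (?F b) (sorted_list_of_set S)"
      unfolding QL_def
    proof (simp only:, intro foldr_insort[where C = "carrier_mat ?d ?d"] ballI)
      fix x Y assume x: "x \<in> set (sorted_list_of_set S)" and Y: "(Y :: complex mat) \<in> carrier_mat ?d ?d"
      have xS: "x \<in> S" using x fS by simp
      have Fa: "?F b a \<in> carrier_mat ?d ?d" and Fx: "?F b x \<in> carrier_mat ?d ?d"
        using valid_F[OF v] xS by auto
      have c: "?F b a * ?F b x = ?F b x * ?F b a" using valid_comm[OF v, of a x] xS by simp
      have "?F b a * (?F b x * Y) = (?F b a * ?F b x) * Y" using Fa Fx Y by simp
      also have "\<dots> = (?F b x * ?F b a) * Y" unfolding c ..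
      also have "\<dots> = ?F b x * (?F b a * Y)" using Fa Fx Y by simp
      finally show "?F b a * (?F b x * Y) = ?F b x * (?F b a * Y)" .
      show "?F b x * Y \<in> carrier_mat ?d ?d" using Fx Y by simp
    qed simp
    also have "QL ?d (?F b) (sorted_list_of_set S) = ?Q"
      by (rule QL_cong) (use fS a in auto)
    finally show ?thesis by simp
  qed
  have Ec: "Emat ?d (pauli_mat (P a)) b \<in> carrier_mat ?d ?d" for b
    using valid_F[OF v] by auto
  have "born_prob n P psi (insert a S) (g(a:=True)) + born_prob n P psi (insert a S) (g(a:=False))
      = Re (expval psi (Emat ?d (pauli_mat (P a)) True * ?Q) + expval psi (Emat ?d (pauli_mat (P a)) False * ?Q))"
    unfolding born_QL key by simp
  also have "expval psi (Emat ?d (pauli_mat (P a)) True * ?Q) + expval psi (Emat ?d (pauli_mat (P a)) False * ?Q)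
     = expval psi ((Emat ?d (pauli_mat (P a)) True + Emat ?d (pauli_mat (P a)) False) * ?Q)"
  proof -
    have "(Emat ?d (pauli_mat (P a)) True + Emat ?d (pauli_mat (P a)) False) * ?Q
       = Emat ?d (pauli_mat (P a)) True * ?Q + Emat ?d (pauli_mat (P a)) False * ?Q"
      by (rule add_mult_distrib_mat[OF Ec Ec Qc])
    moreover have "expval psi (Emat ?d (pauli_mat (P a)) True * ?Q + Emat ?d (pauli_mat (P a)) False * ?Q)
      = expval psi (Emat ?d (pauli_mat (P a)) True * ?Q) + expval psi (Emat ?d (pauli_mat (P a)) False * ?Q)"
      by (rule expval_add[OF mult_carrier_mat[OF Ec Qc] mult_carrier_mat[OF Ec Qc] psi])
    ultimately show ?thesis by simp
  qed
  also have "Emat ?d (pauli_mat (P a)) True + Emat ?d (pauli_mat (P a)) False = 1\<^sub>m ?d"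
  proof (rule Emat_sum)
    show "pauli_mat (P a) \<in> carrier_mat ?d ?d" using v pauli_carrier[of "P a"] unfolding valid_def by auto
  qed
  also have "1\<^sub>m ?d * ?Q = ?Q" using Qc by simp
  finally show ?thesis unfolding born_QL by simp
qed



lemma born_marg:
  assumes fD: "finite D" and psi: "psi \<in> carrier_vec (2^n)"
  shows "D \<inter> G = {} \<Longrightarrow> valid n P (G \<union> D) \<Longrightarrow> y \<in> PiE G (\<lambda>_. UNIV) \<Longrightarrow>
    (\<Sum>s\<in>{s \<in> PiE (G \<union> D) (\<lambda>_. UNIV). restrict s G = y}. born_prob n P psi (G \<union> D) s) = born_prob n P psi G y"
  using fD
proof (induction D rule: finite_induct)
  case empty
  have e: "{s \<in> PiE G (\<lambda>_. UNIV). restrict s G = y} = {y}"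
    using empty.prems(3) by (auto simp: PiE_iff extensional_restrict)
  show ?case unfolding Un_empty_right e by (simp only: sum.insert[OF finite.emptyI empty_iff[THEN iffD1, THEN notI]] sum.empty add_0_right)
next
  case (insert a D)
  let ?S = "G \<union> D"
  have aS: "a \<notin> ?S" using insert by auto
  have eq: "G \<union> insert a D = insert a ?S" by auto
  have v: "valid n P (insert a ?S)" using insert.prems eq by simp
  have vS: "valid n P ?S" using v by (rule valid_subset) auto
  have fS: "finite ?S" using vS unfolding valid_def by auto
  let ?fib = "\<lambda>T. {s \<in> PiE T (\<lambda>_. UNIV). restrict s G = y}"
  let ?m = "\<lambda>(b::bool, g::nat \<Rightarrow> bool). g(a:=b)"
  have fibeq: "?fib (insert a ?S) = ?m ` (UNIV \<times> ?fib ?S)"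
  proof (rule equalityI; rule subsetI)
    fix s assume s: "s \<in> ?fib (insert a ?S)"
    let ?g = "restrict s ?S"
    have sP: "s \<in> PiE (insert a ?S) (\<lambda>_. UNIV)" and sy: "restrict s G = y" using s by auto
    have "s = ?m (s a, ?g)"
    proof (rule ext)
      fix x show "s x = ?m (s a, ?g) x"
      proof (cases "x = a")
        case True then show ?thesis by simp
      next
        case False
        show ?thesis
        proof (cases "x \<in> ?S")
          case True then show ?thesis using False by simp
        next
          case nS: False
          then have "s x = undefined" using sP False by (auto simp: PiE_iff extensional_def)
          then show ?thesis using nS False by simp
        qed
      qed
    qed
    moreover have "?g \<in> PiE ?S (\<lambda>_. UNIV)" by (simp only: restrict_PiE_iff) simp
    moreover have "restrict ?g G = y" unfolding sy[symmetric] by (rule restrict_ext) simp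
    ultimately show "s \<in> ?m ` (UNIV \<times> ?fib ?S)" by blast
  next
    fix s assume "s \<in> ?m ` (UNIV \<times> ?fib ?S)"
    then obtain b g where s: "s = g(a:=b)" and g: "g \<in> ?fib ?S" by auto
    have "restrict (g(a:=b)) G = restrict g G" using insert.hyps(2) insert.prems(1)
      unfolding restrict_def by (auto simp: fun_eq_iff)
    then show "s \<in> ?fib (insert a ?S)" using g s by (auto simp: PiE_iff extensional_def)
  qed
  have inj: "inj_on ?m (UNIV \<times> ?fib ?S)"
  proof (rule inj_onI, clarify)
    fix b g b' g'
    assume g: "g \<in> PiE ?S (\<lambda>_. UNIV)" and g': "g' \<in> PiE ?S (\<lambda>_. UNIV)" and e: "g(a:=b) = g'(a:=b')"
    have "b = b'" using fun_cong[OF e, of a] by simp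
    moreover have "g = g'"
    proof
      fix x show "g x = g' x"
      proof (cases "x = a")
        case True then show ?thesis using g g' aS by (auto simp: PiE_iff extensional_def)
      next
        case False then show ?thesis using fun_cong[OF e, of x] by simp
      qed
    qed
    ultimately show "b = b' \<and> g = g'" by simp
  qed
  have fF: "finite (?fib ?S)" using fS by (simp add: finite_PiE)
  have "(\<Sum>s\<in>?fib (G \<union> insert a D). born_prob n P psi (G \<union> insert a D) s)
      = (\<Sum>s\<in>?m ` (UNIV \<times> ?fib ?S). born_prob n P psi (insert a ?S) s)"
    unfolding eq fibeq ..
  also have "\<dots> = (\<Sum>p\<in>UNIV \<times> ?fib ?S. born_prob n P psi (insert a ?S) (?m p))"
    by (subst sum.reindex[OF inj]) (simp only: comp_def)
  also have "\<dots> = (\<Sum>b\<in>UNIV. \<Sum>g\<in>?fib ?S. born_prob n P psi (insert a ?S) (g(a:=b)))"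
    by (simp only: sum.cartesian_product split_def)
  also have "\<dots> = (\<Sum>g\<in>?fib ?S. \<Sum>b\<in>UNIV. born_prob n P psi (insert a ?S) (g(a:=b)))"
    by (rule sum.swap)
  also have "\<dots> = (\<Sum>g\<in>?fib ?S. born_prob n P psi ?S g)"
  proof (rule sum.cong[OF refl])
    fix g
    show "(\<Sum>b\<in>UNIV. born_prob n P psi (insert a ?S) (g(a:=b))) = born_prob n P psi ?S g"
      using born_pair[OF v aS psi, of g] by (simp add: UNIV_bool add.commute)
  qed
  also have "\<dots> = born_prob n P psi G y"
  proof -
    have "D \<inter> G = {}" using insert.prems(1) by auto
    from insert.IH[OF this vS insert.prems(3)] show ?thesis .
  qed
  finally show ?case .
qed



definition restr :: "nat \<Rightarrow> (nat \<Rightarrow> nat set) \<Rightarrow> (nat \<Rightarrow> nat) \<Rightarrow> (nat \<Rightarrow> nat \<Rightarrow> nat \<Rightarrow> bool) \<Rightarrow> (nat \<Rightarrow> nat \<Rightarrow> nat \<Rightarrow> bool)" where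
  "restr m G M \<omega> = (\<lambda>j\<in>{..<m}. \<lambda>t\<in>{..<M j}. restrict (\<omega> j t) (G j))"

lemma outcome_marg:
  assumes vR: "\<forall>j<m. valid n P (R j)" and GR: "\<forall>j<m. G j \<subseteq> R j" and psi: "psi \<in> carrier_vec (2^n)"
  shows "(\<Sum>\<omega>\<in>outcomes m R M. outcome_prob n P psi m R M \<omega> * h (restr m G M \<omega>))
       = (\<Sum>\<omega>\<in>outcomes m G M. outcome_prob n P psi m G M \<omega> * h \<omega>)"
proof -
  have fR: "finite (R j)" if "j < m" for j using vR that unfolding valid_def by auto
  have fG: "finite (G j)" if "j < m" for j using fR[OF that] GR that by (auto intro: finite_subset)
  let ?B = "\<lambda>j. PiE {..<M j} (\<lambda>t. PiE (R j) (\<lambda>i. (UNIV :: bool set)))"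
  let ?A = "\<lambda>j. PiE {..<M j} (\<lambda>t. PiE (G j) (\<lambda>i. (UNIV :: bool set)))"
  let ?r = "\<lambda>j x. \<lambda>t\<in>{..<M j}. restrict (x t) (G j)"
  let ?pB = "\<lambda>j x. \<Prod>t<M j. born_prob n P psi (R j) (x t)"
  let ?pA = "\<lambda>j x. \<Prod>t<M j. born_prob n P psi (G j) (x t)"
  have base: "(\<Sum>s\<in>{s \<in> PiE (R j) (\<lambda>_. UNIV). restrict s (G j) = y}. born_prob n P psi (R j) s) = born_prob n P psi (G j) y"
    if j: "j < m" and y: "y \<in> PiE (G j) (\<lambda>_. UNIV)" for j y
  proof -
    have e: "G j \<union> (R j - G j) = R j" using GR j by auto
    have "(\<Sum>s\<in>{s \<in> PiE (G j \<union> (R j - G j)) (\<lambda>_. UNIV). restrict s (G j) = y}. born_prob n P psi (G j \<union> (R j - G j)) s) = born_prob n P psi (G j) y"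
      by (rule born_marg) (use fR[OF j] psi vR j e y in auto)
    then show ?thesis unfolding e .
  qed
  have fib: "(\<Sum>x\<in>{x\<in>?B j. ?r j x = y}. ?pB j x) = ?pA j y" if j: "j \<in> {..<m}" and y: "y \<in> ?A j" for j y
  proof -
    have "(\<Sum>x\<in>{x\<in>PiE {..<M j} (\<lambda>t. PiE (R j) (\<lambda>_. UNIV)). (\<lambda>t\<in>{..<M j}. restrict (x t) (G j)) = y}.
              (\<Prod>t\<in>{..<M j}. born_prob n P psi (R j) (x t)))
         = (\<Prod>t\<in>{..<M j}. born_prob n P psi (G j) (y t))"
    proof (rule fiber_sum_ind)
      show "finite {..<M j}" by simp
      show "\<And>t. t \<in> {..<M j} \<Longrightarrow> finite (PiE (R j) (\<lambda>_. UNIV :: bool set))"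
        using fR j by (simp add: finite_PiE)
      show "\<And>t. t \<in> {..<M j} \<Longrightarrow> finite (PiE (G j) (\<lambda>_. UNIV :: bool set))"
        using fG j by (simp add: finite_PiE)
      show "\<And>t x. t \<in> {..<M j} \<Longrightarrow> x \<in> PiE (R j) (\<lambda>_. UNIV :: bool set) \<Longrightarrow> restrict x (G j) \<in> PiE (G j) (\<lambda>_. UNIV)"
        by simp
      show "\<And>t s. t \<in> {..<M j} \<Longrightarrow> s \<in> PiE (G j) (\<lambda>_. UNIV) \<Longrightarrow>
          (\<Sum>x\<in>{x\<in>PiE (R j) (\<lambda>_. UNIV). restrict x (G j) = s}. born_prob n P psi (R j) x) = born_prob n P psi (G j) s"
        using base j by auto
      show "y \<in> PiE {..<M j} (\<lambda>t. PiE (G j) (\<lambda>_. UNIV))" using y .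
    qed
    then show ?thesis by simp
  qed
  have "(\<Sum>x\<in>PiE {..<m} ?B. (\<Prod>j\<in>{..<m}. ?pB j (x j)) * h (\<lambda>j\<in>{..<m}. ?r j (x j)))
       = (\<Sum>y\<in>PiE {..<m} ?A. (\<Prod>j\<in>{..<m}. ?pA j (y j)) * h y)"
  proof (rule fiber_sum)
    show "finite {..<m}" by simp
    show "\<And>j. j \<in> {..<m} \<Longrightarrow> finite (?B j)" using fR by (simp add: finite_PiE)
    show "\<And>j. j \<in> {..<m} \<Longrightarrow> finite (?A j)" using fG by (simp add: finite_PiE)
    show "\<And>j x. j \<in> {..<m} \<Longrightarrow> x \<in> ?B j \<Longrightarrow> ?r j x \<in> ?A j" by (auto simp: PiE_iff)
    show "\<And>j y. j \<in> {..<m} \<Longrightarrow> y \<in> ?A j \<Longrightarrow> (\<Sum>x\<in>{x\<in>?B j. ?r j x = y}. ?pB j x) = ?pA j y"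
      by (rule fib)
  qed
  then show ?thesis unfolding outcomes_def outcome_prob_def restr_def by simp
qed



lemma sample_mean_restr:
  assumes "j < m" "i \<in> G j"
  shows "sample_mean M (restr m G M \<omega>) i j = sample_mean M \<omega> i j"
  unfolding sample_mean_def restr_def using assms by (intro arg_cong[where f = "\<lambda>x. x / _"] sum.cong) auto

lemma Gamma_mono: "\<forall>j<m. G j \<subseteq> R j \<Longrightarrow> Gamma m G i \<subseteq> Gamma m R i"
  unfolding Gamma_def by auto

lemma Gamma_finite: "finite (Gamma m S i)"
  unfolding Gamma_def by auto

lemma sum_ext_weights:
  assumes "\<forall>j<m. G j \<subseteq> R j"
  shows "(\<Sum>j\<in>Gamma m R i. (if j \<in> Gamma m G i then f j else 0)) = (\<Sum>j\<in>Gamma m G i. f j)"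
proof -
  have "(\<Sum>j\<in>Gamma m R i. (if j \<in> Gamma m G i then f j else 0)) = (\<Sum>j\<in>Gamma m R i \<inter> Gamma m G i. f j)"
    by (rule sum.inter_restrict[symmetric]) (rule Gamma_finite)
  also have "Gamma m R i \<inter> Gamma m G i = Gamma m G i" using Gamma_mono[OF assms] by auto
  finally show ?thesis .
qed

lemma est_eq:
  assumes GR: "\<forall>j<m. G j \<subseteq> R j"
  shows "estimator N c m R M (\<lambda>i j. if j \<in> Gamma m G i then w i j else 0) \<omega>
       = estimator N c m G M w (restr m G M \<omega>)"
  unfolding estimator_def
proof (rule sum.cong[OF refl])
  fix i
  have "(\<Sum>j\<in>Gamma m R i. (if j \<in> Gamma m G i then w i j else 0) * sample_mean M \<omega> i j)
      = (\<Sum>j\<in>Gamma m R i. (if j \<in> Gamma m G i then w i j * sample_mean M \<omega> i j else 0))"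
    by (intro sum.cong) auto
  also have "\<dots> = (\<Sum>j\<in>Gamma m G i. w i j * sample_mean M \<omega> i j)" by (rule sum_ext_weights[OF GR])
  also have "\<dots> = (\<Sum>j\<in>Gamma m G i. w i j * sample_mean M (restr m G M \<omega>) i j)"
    by (intro sum.cong refl) (simp add: sample_mean_restr Gamma_def)
  finally show "c i * (\<Sum>j\<in>Gamma m R i. (if j \<in> Gamma m G i then w i j else 0) * sample_mean M \<omega> i j)
      = c i * (\<Sum>j\<in>Gamma m G i. w i j * sample_mean M (restr m G M \<omega>) i j)" by simp
qed

lemma var_eq:
  assumes vR: "\<forall>j<m. valid n P (R j)" and GR: "\<forall>j<m. G j \<subseteq> R j" and psi: "psi \<in> carrier_vec (2^n)"
  shows "est_variance n N c P psi m R M (\<lambda>i j. if j \<in> Gamma m G i then w i j else 0)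
       = est_variance n N c P psi m G M w"
proof -
  let ?w' = "\<lambda>i j. if j \<in> Gamma m G i then w i j else 0"
  let ?XR = "estimator N c m R M ?w'"
  let ?XG = "estimator N c m G M w"
  let ?pR = "outcome_prob n P psi m R M"
  let ?pG = "outcome_prob n P psi m G M"
  have mu: "(\<Sum>\<omega>\<in>outcomes m R M. ?pR \<omega> * ?XR \<omega>) = (\<Sum>\<omega>\<in>outcomes m G M. ?pG \<omega> * ?XG \<omega>)"
    unfolding est_eq[OF GR] by (rule outcome_marg[OF vR GR psi])
  define mu where "mu = (\<Sum>\<omega>\<in>outcomes m G M. ?pG \<omega> * ?XG \<omega>)"
  have "(\<Sum>\<omega>\<in>outcomes m R M. ?pR \<omega> * (?XR \<omega> - mu)\<^sup>2) = (\<Sum>\<omega>\<in>outcomes m G M. ?pG \<omega> * (?XG \<omega> - mu)\<^sup>2)"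
    unfolding est_eq[OF GR] by (rule outcome_marg[OF vR GR psi, where h = "\<lambda>y. (?XG y - mu)\<^sup>2"])
  then show ?thesis unfolding est_variance_def Let_def mu mu_def .
qed

lemma var_nonneg:
  assumes vR: "\<forall>j<m. valid n P (R j)" and psi: "psi \<in> carrier_vec (2^n)"
  shows "0 \<le> est_variance n N c P psi m R M w"
  unfolding est_variance_def Let_def outcome_prob_def
  using born_nonneg[OF _ psi] vR
  by (intro sum_nonneg mult_nonneg_nonneg prod_nonneg) auto

theorem theorem6:
  fixes n N m :: nat
    and c :: "nat \<Rightarrow> real" and P :: "nat \<Rightarrow> pauli list"
    and psi :: "complex vec"
    and G R :: "nat \<Rightarrow> nat set" and M :: "nat \<Rightarrow> nat"
  assumes "pauli_hamiltonian n N c P"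
    and "psi \<in> carrier_vec (2 ^ n)" and "psi \<bullet>c psi = 1"
    and "grouping N P m G"
    and "repacking N P m G R"
    and "\<forall>j<m. M j > 0"
  shows "opt_variance n N c P psi m R M \<le> opt_variance n N c P psi m G M"
proof -
  note H = assms(1) and psi = assms(2)
  have GR: "\<forall>j<m. G j \<subseteq> R j" using assms(5) unfolding repacking_def by auto
  have vR: "\<forall>j<m. valid n P (R j)"
  proof (intro allI impI)
    fix j assume j: "j < m"
    have "commuting_group N P (R j)" using assms(5) j unfolding repacking_def overlapped_grouping_def by auto
    then show "valid n P (R j)" using H unfolding commuting_group_def valid_def pauli_hamiltonian_def
      by (auto intro: finite_subset)
  qed
  have cov: "(\<Union>j<m. G j) = {..<N}" using assms(4) unfolding grouping_def overlapped_grouping_def by auto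
  let ?w0 = "\<lambda>i j. 1 / real (card (Gamma m G i))"
  have adm0: "admissible_weights N m G ?w0"
    unfolding admissible_weights_def
  proof (intro allI impI)
    fix i assume i: "i < N"
    then obtain j where "j < m" "i \<in> G j" using cov by auto
    then have "Gamma m G i \<noteq> {}" unfolding Gamma_def by auto
    then have "card (Gamma m G i) \<noteq> 0" using Gamma_finite[of m G i] by auto
    then show "(\<Sum>j\<in>Gamma m G i. ?w0 i j) = 1" by simp
  qed
  have bdd: "bdd_below ((\<lambda>w. est_variance n N c P psi m R M w) ` {w. admissible_weights N m R w})"
    by (rule bdd_belowI[where m = 0]) (use var_nonneg[OF vR psi] in auto)
  show ?thesis
    unfolding opt_variance_def
  proof (rule cINF_greatest)
    show "{w. admissible_weights N m G w} \<noteq> {}" using adm0 by auto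
  next
    fix w assume w: "w \<in> {w. admissible_weights N m G w}"
    let ?w' = "\<lambda>i j. if j \<in> Gamma m G i then w i j else 0"
    have "admissible_weights N m R ?w'"
      using w unfolding admissible_weights_def by (simp add: sum_ext_weights[OF GR])
    then have "(INF w\<in>{w. admissible_weights N m R w}. est_variance n N c P psi m R M w) \<le> est_variance n N c P psi m R M ?w'"
      by (intro cINF_lower[OF bdd]) auto
    also have "\<dots> = est_variance n N c P psi m G M w" by (rule var_eq[OF vR GR psi])
    finally show "(INF w\<in>{w. admissible_weights N m R w}. est_variance n N c P psi m R M w) \<le> est_variance n N c P psi m G M w" .
  qed
qed

end
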